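(* Let $N>p\geq1$ and let $\mathbf{U}\in\mathbb{R}^{N\times p}$ with $\mathbf{U}^T\mathbf{U}=\mathbf{I}_p$ be drawn from the Bingham distribution with $N\times N$ symmetric parameter matrix $\mathbf{A}$, i.e. with density (with respect to the normalized uniform measure on $\{\mathbf{U}:\mathbf{U}^T\mathbf{U}=\mathbf{I}_p\}$) $p_B(\mathbf{U})=\exp(-\kappa_B(\mathbf{A}))\,\mathrm{etr}(\mathbf{U}^T\mathbf{A}\mathbf{U})$, where $\kappa_B(\mathbf{A})=\ln{}_1F_1(\tfrac{p}{2};\tfrac{N}{2};\mathbf{A})$. Let $\mathbf{A}=\mathbf{U}_a\boldsymbol{\Lambda}_a\mathbf{U}_a^T$ be an eigenvalue decomposition of $\mathbf{A}$ with $\mathbf{U}_a$ orthogonal and $\boldsymbol{\Lambda}_a=\mathrm{diag}(\lambda_a(1),\dots,\lambda_a(N))$, $\lambda_a(1)\geq\dots\geq\lambda_a(N)$. Define $\mathbf{M}=\int\mathbf{U}\mathbf{U}^Tp_B(\mathbf{U})\,d\mathbf{U}$. Then the eigenvalue decomposition of $\mathbf{M}$ is $\mathbf{M}=\exp(-\kappa_B(\mathbf{A}))\,\mathbf{U}_a\boldsymbol{\Gamma}\mathbf{U}_a^T$, where $\boldsymbol{\Gamma}=\mathrm{diag}(\gamma_1,\dots,\gamma_N)$ with $\gamma_k=\frac{\partial \exp(\kappa_B(\boldsymbol{\Lambda}_a))}{\partial\lambda_a(k)}$ (that is, $\boldsymbol{\Gamma}=\partial\exp(\kappa_B(\mathbf{A}))/\partial\boldsymbol{\Lambda}_a$,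 using $\kappa_B(\mathbf{A})=\kappa_B(\boldsymbol{\Lambda}_a)$), and $\gamma_1\geq\gamma_2\geq\dots\geq\gamma_N$.
   Context: $\mathrm{etr}(\mathbf{X})=\exp(\mathrm{Tr}(\mathbf{X}))$. ${}_1F_1(a;b;\mathbf{X})$ is the confluent hypergeometric function of matrix argument, which here is the normalizing constant: ${}_1F_1(\tfrac p2;\tfrac N2;\mathbf{A})=\int\mathrm{etr}(\mathbf{U}^T\mathbf{A}\mathbf{U})\,d\mathbf{U}$ with respect to the normalized uniform measure; it depends on $\mathbf{A}$ only through its eigenvalues. *)

theory Defs
  imports "HOL-Analysis.Analysis" "HOL-Probability.Probability"
begin

definition stiefel :: "(real^'p^'n) set" where
  "stiefel = {U. transpose U ** U = mat 1}"

definition uniform_stiefel :: "(real^'p^'n) measure \<Rightarrow> bool" where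
  "uniform_stiefel \<mu> \<longleftrightarrow> sets \<mu> = sets borel \<and> prob_space \<mu> \<and>
     emeasure \<mu> (stiefel :: (real^'p^'n) set) = 1 \<and>
     (\<forall>Q::real^'n^'n. orthogonal_matrix Q \<longrightarrow> distr \<mu> \<mu> (\<lambda>U. Q ** U) = \<mu>)"

definition etr :: "real^'n^'n \<Rightarrow> real" where
  "etr X = exp (trace X)"

text \<open>1F1(p/2; N/2; A) as the normalizing integral.\<close>
definition hyp1F1 :: "(real^'p^'n) measure \<Rightarrow> real^'n^'n \<Rightarrow> real" where
  "hyp1F1 \<mu> A = (\<integral>U. etr (transpose U ** A ** U) \<partial>\<mu>)"

definition kappaB :: "(real^'p^'n) measure \<Rightarrow> real^'n^'n \<Rightarrow> real" where
  "kappaB \<mu> A = ln (hyp1F1 \<mu> A)"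

definition bingham_density :: "(real^'p^'n) measure \<Rightarrow> real^'n^'n \<Rightarrow> real^'p^'n \<Rightarrow> real" where
  "bingham_density \<mu> A U = exp (- kappaB \<mu> A) * etr (transpose U ** A ** U)"

definition diag_mat :: "real^'n \<Rightarrow> real^'n^'n" where
  "diag_mat v = (\<chi> i j. if i = j then v $ i else 0)"

end

theory Submission
  imports Defs
begin


lemma stiefel_entry:
  fixes V :: "real^'p^'n"
  assumes "V \<in> stiefel" shows "\<bar>V$i$q\<bar> \<le> 1"
proof -
  have "(transpose V ** V)$q$q = 1" using assms by (simp add: stiefel_def mat_def)
  hence s: "(\<Sum>k\<in>UNIV. V$k$q * V$k$q) = 1"
    by (simp add: matrix_matrix_mult_def transpose_def)
  have "V$i$q * V$i$q \<le> (\<Sum>k\<in>UNIV. V$k$q * V$k$q)"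
    by (rule member_le_sum) auto
  hence "(V$i$q)^2 \<le> 1" using s by (simp add: power2_eq_square)
  thus ?thesis by (simp add: abs_square_le_1)
qed

lemma bounded_stiefel: "bounded (stiefel :: (real^'p^'n) set)"
proof -
  have "norm V \<le> real CARD('n) * real CARD('p)" if "V \<in> stiefel" for V :: "real^'p^'n"
  proof -
    have "norm V \<le> (\<Sum>i\<in>UNIV. norm (V$i))"
      unfolding norm_vec_def by (rule L2_set_le_sum) auto
    also have "\<dots> \<le> (\<Sum>i\<in>(UNIV::'n set). real CARD('p))"
    proof (rule sum_mono)
      fix i
      have "norm (V$i) \<le> (\<Sum>q\<in>UNIV. \<bar>V$i$q\<bar>)" by (rule norm_le_l1_cart)
      also have "\<dots> \<le> (\<Sum>q\<in>(UNIV::'p set). 1)"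
        by (rule sum_mono) (rule stiefel_entry[OF that])
      finally show "norm (V$i) \<le> real CARD('p)" by simp
    qed
    finally show ?thesis by simp
  qed
  thus ?thesis unfolding bounded_iff by blast
qed

lemma us_basic:
  fixes \<mu> :: "(real^'p^'n) measure"
  assumes "uniform_stiefel \<mu>"
  shows "prob_space \<mu>" "sets \<mu> = sets borel" "space \<mu> = UNIV"
    "AE V in \<mu>. V \<in> stiefel"
proof -
  show p: "prob_space \<mu>" and s: "sets \<mu> = sets borel" using assms by (auto simp: uniform_stiefel_def)
  show sp: "space \<mu> = UNIV" using sets_eq_imp_space_eq[OF s] by simp
  have e: "emeasure \<mu> stiefel = 1" using assms by (auto simp: uniform_stiefel_def)
  have m: "stiefel \<in> sets \<mu>"
    using e emeasure_notin_sets by fastforce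
  interpret prob_space \<mu> by (rule p)
  show "AE V in \<mu>. V \<in> stiefel"
    using AE_in_set_eq_1[OF m] e by (simp add: emeasure_eq_measure)
qed

lemma us_integrable:
  fixes \<mu> :: "(real^'p^'n) measure"
    and g :: "real^'p^'n \<Rightarrow> 'b::{banach, second_countable_topology}"
  assumes "uniform_stiefel \<mu>" "continuous_on UNIV g"
  shows "integrable \<mu> g"
proof -
  note b = us_basic[OF assms(1)]
  interpret prob_space \<mu> by (rule b(1))
  have "compact (closure (stiefel :: (real^'p^'n) set))"
    using bounded_stiefel by simp
  hence "compact (g ` closure stiefel)"
    using compact_continuous_image[OF continuous_on_subset[OF assms(2) subset_UNIV]] by blast
  then obtain B where B: "\<And>y. y \<in> g ` closure stiefel \<Longrightarrow> norm y \<le> B"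
    using compact_imp_bounded bounded_iff by metis
  have "AE V in \<mu>. norm (g V) \<le> B"
    using b(4) by eventually_elim (auto intro!: B closure_subset[THEN subsetD])
  moreover have "g \<in> borel_measurable \<mu>"
    using borel_measurable_continuous_onI[OF assms(2)] measurable_cong_sets[OF b(2) refl] by blast
  ultimately show ?thesis by (rule integrable_const_bound)
qed

lemma us_invariant:
  fixes \<mu> :: "(real^'p^'n) measure"
    and g :: "real^'p^'n \<Rightarrow> 'b::{banach, second_countable_topology}"
  assumes "uniform_stiefel \<mu>" "continuous_on UNIV g" "orthogonal_matrix Q"
  shows "integral\<^sup>L \<mu> g = integral\<^sup>L \<mu> (\<lambda>V. g (Q ** V))"
proof -
  note b = us_basic[OF assms(1)]
  have d: "distr \<mu> \<mu> (\<lambda>U. Q ** U) = \<mu>" using assms by (auto simp: uniform_stiefel_def)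
  have cl: "continuous_on UNIV (\<lambda>U::real^'p^'n. Q ** U)"
    by (intro linear_continuous_on linear_conv_bounded_linear[THEN iffD1])
       (auto simp: linear_iff matrix_add_ldistrib vec_eq_iff matrix_matrix_mult_def sum_distrib_left mult_ac distrib_left sum.distrib)
  have m: "(\<lambda>U. Q ** U) \<in> measurable \<mu> \<mu>"
    using borel_measurable_continuous_onI[OF cl] measurable_cong_sets[OF b(2) b(2)] by blast
  have g: "g \<in> borel_measurable \<mu>"
    using borel_measurable_continuous_onI[OF assms(2)] measurable_cong_sets[OF b(2) refl] by blast
  have "integral\<^sup>L \<mu> g = integral\<^sup>L (distr \<mu> \<mu> (\<lambda>U. Q ** U)) g" by (simp add: d)
  also have "\<dots> = integral\<^sup>L \<mu> (\<lambda>V. g (Q ** V))" by (rule integral_distr[OF m g])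
  finally show ?thesis .
qed



definition pv :: "'n \<Rightarrow> 'n \<Rightarrow> real^'p^'n \<Rightarrow> real" where
  "pv i j V = (\<Sum>q\<in>UNIV. V$i$q * V$j$q)"

definition Fv :: "real^'n \<Rightarrow> real^'p^'n \<Rightarrow> real" where
  "Fv v V = (\<Sum>k\<in>UNIV. v$k * pv k k V)"

lemma cont_entry[continuous_intros]: "continuous_on S (\<lambda>V::real^'p^'n. V$i$q)"
  by (intro linear_continuous_on bounded_linear_compose[OF bounded_linear_vec_nth bounded_linear_vec_nth])

lemma cont_pv[continuous_intros]: "continuous_on S (pv i j)"
  unfolding pv_def by (intro continuous_intros)

lemma cont_Fv[continuous_intros]: "continuous_on S (Fv v)"
  unfolding Fv_def by (intro continuous_intros)

lemma cont_lmul[continuous_intros]: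
  fixes Q :: "real^'n^'n"
  assumes "continuous_on S (f :: _ \<Rightarrow> real^'p^'n)"
  shows "continuous_on S (\<lambda>x. Q ** f x)"
proof -
  have "continuous_on UNIV (\<lambda>U::real^'p^'n. Q ** U)"
    by (intro linear_continuous_on linear_conv_bounded_linear[THEN iffD1])
       (auto simp: linear_iff matrix_add_ldistrib vec_eq_iff matrix_matrix_mult_def sum_distrib_left mult_ac distrib_left sum.distrib)
  thus ?thesis using continuous_on_compose2[OF _ assms subset_UNIV] by blast
qed

lemma cont_pv2[continuous_intros]: "continuous_on S f \<Longrightarrow> continuous_on S (\<lambda>x. pv i j (f x))"
  using continuous_on_compose2[OF cont_pv _ subset_UNIV] by blast

lemma cont_Fv2[continuous_intros]: "continuous_on S f \<Longrightarrow> continuous_on S (\<lambda>x. Fv v (f x))"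
  using continuous_on_compose2[OF cont_Fv _ subset_UNIV] by blast

lemma cont_mat:
  fixes f :: "'a::topological_space \<Rightarrow> real^'m^'n"
  assumes "\<And>i j. continuous_on S (\<lambda>x. f x $ i $ j)"
  shows "continuous_on S f"
proof -
  have "continuous_on S (\<lambda>x. \<chi> i. \<chi> j. f x $ i $ j)"
    by (intro continuous_on_vec_lambda allI assms)
  thus ?thesis by simp
qed

lemma integral_entry:
  fixes f :: "'a \<Rightarrow> real^'m^'n"
  assumes "integrable M f"
  shows "(integral\<^sup>L M f) $ i $ j = integral\<^sup>L M (\<lambda>x. f x $ i $ j)"
proof -
  have bl: "bounded_linear (\<lambda>X::real^'m^'n. X $ i $ j)"
    by (rule bounded_linear_compose[OF bounded_linear_vec_nth bounded_linear_vec_nth])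
  show ?thesis using integral_bounded_linear[OF bl assms] by simp
qed

lemma trace_diag: "trace (transpose V ** diag_mat v ** V) = Fv v V"
  unfolding trace_def Fv_def pv_def
  by (simp add: matrix_matrix_mult_def transpose_def diag_mat_def sum_distrib_left
      mult_delta_left mult_delta_right sum.delta sum.delta' mult_ac)
     (rule sum.swap)

lemma vvt_entry: "(V ** transpose V) $ i $ j = pv i j V"
  by (simp add: matrix_matrix_mult_def transpose_def pv_def)

lemma rot_trace:
  fixes Ua D :: "real^'n^'n" and V :: "real^'p^'n"
  assumes "orthogonal_matrix Ua"
  shows "transpose (Ua ** V) ** (Ua ** D ** transpose Ua) ** (Ua ** V) = transpose V ** D ** V"
proof -
  have o: "transpose Ua ** Ua = mat 1" using assms by (simp add: orthogonal_matrix_def)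
  have "transpose (Ua ** V) ** (Ua ** D ** transpose Ua) ** (Ua ** V)
      = transpose V ** (transpose Ua ** Ua) ** D ** (transpose Ua ** Ua) ** V"
    by (simp add: matrix_transpose_mul matrix_mul_assoc)
  thus ?thesis by (simp add: o)
qed

lemma rot_vvt:
  fixes Ua :: "real^'n^'n" and V :: "real^'p^'n"
  shows   "(Ua ** V) ** transpose (Ua ** V) = Ua ** (V ** transpose V) ** transpose Ua"
  by (simp add: matrix_transpose_mul matrix_mul_assoc)



definition sflip :: "'n \<Rightarrow> real^'n^'n" where
  "sflip i = (\<chi> a b. if a = b then (if a = i then -1 else 1) else 0)"

lemma sflip_mult: "(sflip i ** V) $ a $ q = (if a = i then -1 else 1) * V$a$q"
  unfolding sflip_def matrix_matrix_mult_def by (simp add: mult_delta_left sum.delta)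

lemma sflip_orth: "orthogonal_matrix (sflip i)"
  unfolding orthogonal_matrix_def sflip_def matrix_matrix_mult_def transpose_def mat_def vec_eq_iff
  by (simp add: mult_delta_left mult_delta_right sum.delta)

lemma sflip_pv: "pv a b (sflip i ** V) = (if a = i then -1 else 1) * (if b = i then -1 else 1) * pv a b V"
  by (simp add: pv_def sflip_mult sum_distrib_left mult_ac)

lemma sflip_Fv: "Fv v (sflip i ** V) = Fv v V"
  by (auto simp: Fv_def sflip_pv intro!: sum.cong)

definition sw :: "'n \<Rightarrow> 'n \<Rightarrow> 'n \<Rightarrow> 'n" where
  "sw i j a = (if a = i then j else if a = j then i else a)"

lemma sw_sw[simp]: "sw i j (sw i j a) = a" by (simp add: sw_def)
lemma sw_inj[simp]: "(sw i j a = sw i j b) = (a = b)" by (metis sw_sw)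
lemma sw_eq: "(sw i j a = c) \<longleftrightarrow> (a = sw i j c)" by (auto simp: sw_def)

lemma sum_sw: "(\<Sum>c\<in>UNIV. f (sw i j c)) = (\<Sum>c\<in>UNIV. (f c :: real))"
proof -
  have "bij (sw i j)" by (rule o_bij[of "sw i j"]) (auto simp: fun_eq_iff)
  thus ?thesis by (rule sum.reindex_bij_betw[of "sw i j" UNIV UNIV f, simplified])
qed

definition pmat :: "'n \<Rightarrow> 'n \<Rightarrow> real^'n^'n" where
  "pmat i j = (\<chi> a b. if b = sw i j a then 1 else 0)"

lemma pmat_mult: "(pmat i j ** V) $ a $ q = V $ (sw i j a) $ q"
  unfolding pmat_def matrix_matrix_mult_def by (simp add: mult_delta_left sum.delta)

lemma pmat_orth: "orthogonal_matrix (pmat i j)"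
proof -
  have e: "(\<Sum>c\<in>UNIV. (if c = sw i j a then 1 else 0) * (if c = sw i j b then 1 else (0::real)))
     = (if a = b then 1 else 0)" for a b
    by (simp add: mult_delta_left mult_delta_right sum.delta sum.delta')
  have e2: "(\<Sum>c\<in>UNIV. (if a = sw i j c then 1 else 0) * (if b = sw i j c then 1 else (0::real)))
     = (if a = b then 1 else 0)" for a b
  proof -
    have "(\<Sum>c\<in>UNIV. (if a = sw i j c then 1 else 0) * (if b = sw i j c then 1 else (0::real)))
      = (\<Sum>c\<in>UNIV. (if a = sw i j (sw i j c) then 1 else 0) * (if b = sw i j (sw i j c) then 1 else (0::real)))"
      by (rule sum_sw[symmetric, of "\<lambda>c. (if a = sw i j c then 1 else 0) * (if b = sw i j c then 1 else (0::real))"])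
    also have "\<dots> = (if a = b then 1 else 0)" by (simp add: mult_delta_left mult_delta_right sum.delta sum.delta')
    finally show ?thesis .
  qed
  have 1: "transpose (pmat i j) ** pmat i j = mat 1"
    unfolding pmat_def matrix_matrix_mult_def transpose_def mat_def vec_eq_iff
    by (simp add: e2 eq_commute[of "sw i j _"])
  have 2: "pmat i j ** transpose (pmat i j) = mat 1"
    unfolding pmat_def matrix_matrix_mult_def transpose_def mat_def vec_eq_iff
    using e by simp
  show ?thesis using 1 2 by (simp add: orthogonal_matrix_def)
qed

lemma pmat_pv: "pv a b (pmat i j ** V) = pv (sw i j a) (sw i j b) V"
  by (simp add: pv_def pmat_mult)

lemma pmat_Fv:
  assumes "i \<noteq> j"
  shows "Fv v V - Fv v (pmat i j ** V) = (v$i - v$j) * (pv i i V - pv j j V)"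
proof -
  have "Fv v V - Fv v (pmat i j ** V) = (\<Sum>k\<in>UNIV. v$k * (pv k k V - pv (sw i j k) (sw i j k) V))"
    by (simp add: Fv_def pmat_pv sum_subtractf algebra_simps)
  also have "\<dots> = (\<Sum>k\<in>{i,j}. v$k * (pv k k V - pv (sw i j k) (sw i j k) V))"
    by (rule sum.mono_neutral_right) (auto simp: sw_def)
  also have "\<dots> = (v$i - v$j) * (pv i i V - pv j j V)"
    using assms by (simp add: sw_def algebra_simps)
  finally show ?thesis .
qed



definition gam :: "(real^'p^'n) measure \<Rightarrow> real^'n \<Rightarrow> real^'n" where
  "gam \<mu> la = (\<chi> k. \<integral>V. exp (Fv la V) * pv k k V \<partial>\<mu>)"

lemma int_cont:
  fixes \<mu> :: "(real^'p^'n) measure"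
  assumes "uniform_stiefel \<mu>"
  shows "integrable \<mu> (\<lambda>V. exp (Fv la V) * pv i j V)"
  by (rule us_integrable[OF assms]) (intro continuous_intros)

lemma D1:
  fixes \<mu> :: "(real^'p^'n) measure"
  assumes us: "uniform_stiefel \<mu>"
  shows "(\<integral>V. exp (Fv la V) *\<^sub>R (V ** transpose V) \<partial>\<mu>) = diag_mat (gam \<mu> la)"
proof -
  have int: "integrable \<mu> (\<lambda>V::real^'p^'n. exp (Fv la V) *\<^sub>R (V ** transpose V))"
    by (rule us_integrable[OF us], rule cont_mat) (simp add: vvt_entry, intro continuous_intros)
  have off: "(\<integral>V. exp (Fv la V) * pv i j V \<partial>\<mu>) = 0" if "i \<noteq> j" for i j
  proof -
    let ?I = "(\<integral>V. exp (Fv la V) * pv i j V \<partial>\<mu>)"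
    have "?I = (\<integral>V. exp (Fv la (sflip i ** V)) * pv i j (sflip i ** V) \<partial>\<mu>)"
      by (rule us_invariant[OF us _ sflip_orth]) (intro continuous_intros)
    also have "\<dots> = (\<integral>V. - (exp (Fv la V) * pv i j V) \<partial>\<mu>)"
      using that by (simp add: sflip_Fv sflip_pv)
    also have "\<dots> = - ?I" by simp
    finally show ?thesis by simp
  qed
  show ?thesis
    unfolding vec_eq_iff
  proof (intro allI)
    fix i j
    show "(\<integral>V. exp (Fv la V) *\<^sub>R (V ** transpose V) \<partial>\<mu>) $ i $ j = diag_mat (gam \<mu> la) $ i $ j"
      using off[of i j] by (simp add: integral_entry[OF int] vvt_entry diag_mat_def gam_def)
  qed
qed

lemma expdiff_nonneg:
  fixes x y a b c :: real
  assumes "x - y = c * (a - b)" "c \<ge> 0"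
  shows "(exp x - exp y) * (a - b) \<ge> 0"
proof (cases "a \<ge> b")
  case True
  hence "c * (a - b) \<ge> 0" using assms by simp
  hence "x \<ge> y" using assms by simp
  thus ?thesis using True by (simp add: mult_nonneg_nonneg)
next
  case False
  hence "c * (a - b) \<le> 0" using assms by (simp add: mult_nonneg_nonpos)
  hence "x \<le> y" using assms by simp
  thus ?thesis using False by (simp add: mult_nonpos_nonpos)
qed

lemma D2:
  fixes \<mu> :: "(real^'p^'n) measure"
  assumes us: "uniform_stiefel \<mu>" and le: "la$j \<le> la$i"
  shows "gam \<mu> la $ j \<le> gam \<mu> la $ i"
proof (cases "i = j")
  case True thus ?thesis by simp
next
  case ne: False
  let ?P = "pmat i j :: real^'n^'n"
  let ?g = "\<lambda>V::real^'p^'n. exp (Fv la V) * (pv i i V - pv j j V)"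
  have ig: "integrable \<mu> ?g" by (rule us_integrable[OF us]) (intro continuous_intros)
  have ig2: "integrable \<mu> (\<lambda>V. ?g (?P ** V))" by (rule us_integrable[OF us]) (intro continuous_intros)
  have d: "gam \<mu> la $ i - gam \<mu> la $ j = integral\<^sup>L \<mu> ?g"
    using int_cont[OF us, of la i i] int_cont[OF us, of la j j]
    by (simp add: gam_def right_diff_distrib)
  have inv: "integral\<^sup>L \<mu> ?g = integral\<^sup>L \<mu> (\<lambda>V. ?g (?P ** V))"
    by (rule us_invariant[OF us _ pmat_orth]) (intro continuous_intros)
  have swi: "sw i j i = j" "sw i j j = i" by (auto simp: sw_def)
  have "2 * integral\<^sup>L \<mu> ?g = integral\<^sup>L \<mu> ?g + integral\<^sup>L \<mu> (\<lambda>V. ?g (?P ** V))"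
    using inv by simp
  also have "\<dots> = integral\<^sup>L \<mu> (\<lambda>V. ?g V + ?g (?P ** V))"
    by (rule Bochner_Integration.integral_add[OF ig ig2, symmetric])
  also have "\<dots> = (\<integral>V. (exp (Fv la V) - exp (Fv la (?P ** V))) * (pv i i V - pv j j V) \<partial>\<mu>)"
    by (rule Bochner_Integration.integral_cong) (auto simp: pmat_pv swi algebra_simps)
  also have "\<dots> \<ge> 0"
    by (rule integral_nonneg_AE, rule AE_I2, rule expdiff_nonneg[OF pmat_Fv[OF ne]]) (use le in simp)
  finally show ?thesis using d by simp
qed



lemma exp_taylor_bound:
  fixes x :: real
  assumes "\<bar>x\<bar> \<le> 1"
  shows "\<bar>exp x - 1 - x\<bar> \<le> x^2"
proof (cases "x \<ge> 0")
  case True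
  have a: "exp x \<le> 1 + x + x^2" using exp_bound[of x] assms True by simp
  have b: "1 + x \<le> exp x" by (rule exp_ge_add_one_self)
  have c: "0 \<le> x^2" by simp
  show ?thesis unfolding abs_le_iff using a b c by linarith
next
  case False
  have l: "0 \<le> exp x - 1 - x" using exp_ge_add_one_self[of x] by linarith
  have e1: "exp (-x) \<ge> 1 - x" using exp_ge_add_one_self[of "-x"] by linarith
  have pos: "1 - x > 0" using False by simp
  have "exp x = 1 / exp (-x)" by (simp add: exp_minus field_simps)
  also have "\<dots> \<le> 1 / (1 - x)" using e1 pos by (intro divide_left_mono) auto
  also have "\<dots> \<le> 1 + x + x^2"
  proof -
    have "(1 + x + x^2) * (1 - x) = 1 - x^3" by (simp add: algebra_simps power2_eq_square power3_eq_cube)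
    also have "\<dots> \<ge> 1"
    proof -
      have "x*x \<ge> 0" by simp
      hence "(x*x)*x \<le> 0" using False by (intro mult_nonneg_nonpos) auto
      thus ?thesis by (simp add: power3_eq_cube)
    qed
    finally have "1 \<le> (1 + x + x^2) * (1 - x)" .
    thus ?thesis using pos by (simp add: divide_le_eq)
  qed
  finally show ?thesis using l by simp
qed

lemma stiefel_cbound:
  fixes g :: "real^'p^'n \<Rightarrow> real"
  assumes "continuous_on UNIV g"
  shows "\<exists>B\<ge>0. \<forall>V\<in>stiefel. \<bar>g V\<bar> \<le> B"
proof -
  have "compact (closure (stiefel :: (real^'p^'n) set))"
    using bounded_stiefel by simp
  hence "compact (g ` closure stiefel)"
    using compact_continuous_image[OF continuous_on_subset[OF assms subset_UNIV]] by blast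
  then obtain B where B: "\<And>y. y \<in> g ` closure stiefel \<Longrightarrow> norm y \<le> B"
    using compact_imp_bounded bounded_iff by metis
  show ?thesis
  proof (rule exI[of _ "max B 0"], intro conjI ballI)
    fix V :: "real^'p^'n" assume "V \<in> stiefel"
    hence "g V \<in> g ` closure stiefel" using closure_subset by blast
    hence "\<bar>g V\<bar> \<le> B" using B by force
    thus "\<bar>g V\<bar> \<le> max B 0" by simp
  qed simp
qed

lemma pv_bound:
  assumes "V \<in> stiefel"
  shows "0 \<le> pv k k (V::real^'p^'n)" "pv k k V \<le> real CARD('p)"
proof -
  show "0 \<le> pv k k V" unfolding pv_def by (intro sum_nonneg) simp
  have "pv k k V \<le> (\<Sum>q\<in>(UNIV::'p set). 1)"
    unfolding pv_def
  proof (rule sum_mono)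
    fix q
    have "\<bar>V$k$q\<bar> \<le> 1" by (rule stiefel_entry[OF assms])
    hence "(V$k$q)^2 \<le> 1" by (simp add: abs_square_le_1)
    thus "V$k$q * V$k$q \<le> 1" by (simp add: power2_eq_square)
  qed
  thus "pv k k V \<le> real CARD('p)" by simp
qed

lemma hyp_diag:
  "hyp1F1 \<mu> (diag_mat X) = (\<integral>V. exp (Fv X V) \<partial>\<mu>)"
  by (simp add: hyp1F1_def etr_def trace_diag)

lemma Fv_axis: "Fv (la + t *\<^sub>R axis k 1) V = Fv la V + t * pv k k V"
  by (simp add: Fv_def axis_def distrib_right sum.distrib mult_delta_left mult_delta_right sum.delta sum.delta')

lemma hyp_pos:
  fixes \<mu> :: "(real^'p^'n) measure"
  assumes us: "uniform_stiefel \<mu>"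
  shows "hyp1F1 \<mu> (diag_mat X) > 0"
proof -
  note b = us_basic[OF us]
  interpret prob_space \<mu> by (rule b(1))
  have int: "integrable \<mu> (\<lambda>V. exp (Fv X V))" by (rule us_integrable[OF us]) (intro continuous_intros)
  have a: "(\<integral>V. exp (Fv X V) \<partial>\<mu>) \<noteq> 0"
    using integral_nonneg_eq_0_iff_AE[OF int] AE_False by (simp add: less_imp_le)
  have b: "(\<integral>V. exp (Fv X V) \<partial>\<mu>) \<ge> 0" by (rule integral_nonneg_AE) (simp add: less_imp_le)
  show ?thesis unfolding hyp_diag using a b by linarith
qed



lemma D3:
  fixes \<mu> :: "(real^'p^'n) measure"
  assumes us: "uniform_stiefel \<mu>"
  shows "((\<lambda>t. exp (kappaB \<mu> (diag_mat (la + t *\<^sub>R axis k 1)))) has_real_derivative gam \<mu> la $ k) (at 0)"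
proof -
  note b = us_basic[OF us]
  interpret prob_space \<mu> by (rule b(1))
  define H where "H t = (\<integral>V. exp (Fv la V + t * pv k k V) \<partial>\<mu>)" for t
  define G where "G = gam \<mu> la $ k"
  have eqf: "(\<lambda>t. exp (kappaB \<mu> (diag_mat (la + t *\<^sub>R axis k 1)))) = H"
  proof
    fix t
    show "exp (kappaB \<mu> (diag_mat (la + t *\<^sub>R axis k 1))) = H t"
      using hyp_pos[OF us, of "la + t *\<^sub>R axis k 1"]
      by (simp add: kappaB_def hyp_diag Fv_axis H_def)
  qed
  have G: "G = (\<integral>V. exp (Fv la V) * pv k k V \<partial>\<mu>)" by (simp add: G_def gam_def)
  define W where "W = real CARD('p) + 1"
  have W: "W > 0" by (simp add: W_def)
  have "continuous_on UNIV (\<lambda>V::real^'p^'n. exp (Fv la V))" by (intro continuous_intros)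
  hence "\<exists>B\<ge>0. \<forall>V\<in>(stiefel::(real^'p^'n) set). \<bar>exp (Fv la V)\<bar> \<le> B" by (rule stiefel_cbound)
  then obtain B where B0: "B \<ge> 0" and B': "\<forall>V\<in>(stiefel::(real^'p^'n) set). \<bar>exp (Fv la V)\<bar> \<le> B"
    by auto
  have B: "\<And>V::real^'p^'n. V \<in> stiefel \<Longrightarrow> \<bar>exp (Fv la V)\<bar> \<le> B" using B' by blast
  have key: "\<bar>H t - H 0 - t * G\<bar> \<le> B * W^2 * t^2" if t: "\<bar>t\<bar> * W \<le> 1" for t
  proof -
    have i1: "integrable \<mu> (\<lambda>V. exp (Fv la V + t * pv k k V))" by (rule us_integrable[OF us]) (intro continuous_intros)
    have i2: "integrable \<mu> (\<lambda>V. exp (Fv la V))" by (rule us_integrable[OF us]) (intro continuous_intros)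
    have i3: "integrable \<mu> (\<lambda>V. exp (Fv la V) * pv k k V)" by (rule us_integrable[OF us]) (intro continuous_intros)
    have "H t - H 0 - t * G = (\<integral>V. exp (Fv la V + t * pv k k V) - exp (Fv la V) - t * (exp (Fv la V) * pv k k V) \<partial>\<mu>)"
      using i1 i2 i3 by (simp add: H_def G)
    also have "\<dots> = (\<integral>V. exp (Fv la V) * (exp (t * pv k k V) - 1 - t * pv k k V) \<partial>\<mu>)"
      by (rule Bochner_Integration.integral_cong) (auto simp: exp_add algebra_simps)
    finally have eq: "H t - H 0 - t * G = \<dots>" .
    have "\<bar>\<integral>V. exp (Fv la V) * (exp (t * pv k k V) - 1 - t * pv k k V) \<partial>\<mu>\<bar>
        \<le> (\<integral>V. \<bar>exp (Fv la V) * (exp (t * pv k k V) - 1 - t * pv k k V)\<bar> \<partial>\<mu>)"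
      using integral_norm_bound[of \<mu> "\<lambda>V. exp (Fv la V) * (exp (t * pv k k V) - 1 - t * pv k k V)"] by simp
    also have "\<dots> \<le> (\<integral>V. B * W^2 * t^2 \<partial>\<mu>)"
    proof (rule integral_mono_AE)
      show "integrable \<mu> (\<lambda>V. \<bar>exp (Fv la V) * (exp (t * pv k k V) - 1 - t * pv k k V)\<bar>)"
        by (rule us_integrable[OF us]) (intro continuous_intros)
      show "integrable \<mu> (\<lambda>V. B * W^2 * t^2)" by simp
      show "AE V in \<mu>. \<bar>exp (Fv la V) * (exp (t * pv k k V) - 1 - t * pv k k V)\<bar> \<le> B * W^2 * t^2"
        using b(4)
      proof eventually_elim
        case (elim V)
        have p0: "0 \<le> pv k k V" and p1: "pv k k V \<le> W" using pv_bound[OF elim, of k] by (auto simp: W_def)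
        have ax: "\<bar>t * pv k k V\<bar> \<le> 1"
        proof -
          have "\<bar>t * pv k k V\<bar> = \<bar>t\<bar> * pv k k V" using p0 by (simp add: abs_mult)
          also have "\<dots> \<le> \<bar>t\<bar> * W" using p1 by (intro mult_left_mono) auto
          finally show ?thesis using t by simp
        qed
        have sq: "(t * pv k k V)^2 \<le> W^2 * t^2"
        proof -
          have "pv k k V ^2 \<le> W^2" using p0 p1 by (intro power_mono) auto
          hence "t^2 * pv k k V ^2 \<le> t^2 * W^2" by (intro mult_left_mono) auto
          thus ?thesis by (simp add: power_mult_distrib mult_ac)
        qed
        have "\<bar>exp (Fv la V) * (exp (t * pv k k V) - 1 - t * pv k k V)\<bar>
            = \<bar>exp (Fv la V)\<bar> * \<bar>exp (t * pv k k V) - 1 - t * pv k k V\<bar>" by (simp add: abs_mult)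
        also have "\<dots> \<le> B * (W^2 * t^2)"
          using B[OF elim] exp_taylor_bound[OF ax] sq B0
          by (intro mult_mono) auto
        finally show ?case by (simp add: mult_ac)
      qed
    qed
    also have "\<dots> = B * W^2 * t^2" by (simp add: prob_space)
    finally show ?thesis using eq by simp
  qed
  have lim: "((\<lambda>t. (H t - H 0) / (t - 0)) \<longlongrightarrow> G) (at 0)"
    unfolding LIM_eq
  proof (intro allI impI)
    fix r :: real assume r: "r > 0"
    define s where "s = min (1 / W) (r / (B * W^2 + 1))"
    have BW: "B * W^2 + 1 > 0" using B0 by (simp add: add_nonneg_pos)
    have s: "s > 0" using r W BW by (simp add: s_def)
    have "\<bar>(H t - H 0) / t - G\<bar> < r" if "t \<noteq> 0" "\<bar>t\<bar> < s" for t
    proof -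
      have tW: "\<bar>t\<bar> * W \<le> 1" using that W by (simp add: s_def field_simps)
      have "(H t - H 0) / t - G = (H t - H 0 - t * G) / t" using that by (simp add: field_simps)
      hence "\<bar>(H t - H 0) / t - G\<bar> = \<bar>H t - H 0 - t * G\<bar> / \<bar>t\<bar>" by (simp add: abs_divide)
      also have "\<dots> \<le> B * W^2 * t^2 / \<bar>t\<bar>" using key[OF tW] by (intro divide_right_mono) auto
      also have "\<dots> = B * W^2 * \<bar>t\<bar>"
      proof -
        have t2: "t^2 = \<bar>t\<bar> * \<bar>t\<bar>" by (simp add: power2_eq_square)
        have tn: "\<bar>t\<bar> \<noteq> 0" using that by simp
        have gen: "\<And>a::real. a \<noteq> 0 \<Longrightarrow> B * W^2 * (a * a) / a = B * W^2 * a" by simp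
        show ?thesis unfolding t2 by (rule gen[OF tn])
      qed
      also have "\<dots> \<le> (B * W^2 + 1) * \<bar>t\<bar>" by (intro mult_right_mono) auto
      also have "\<dots> < (B * W^2 + 1) * (r / (B * W^2 + 1))"
        using that BW by (intro mult_strict_left_mono) (auto simp: s_def)
      also have "\<dots> = r" using BW by simp
      finally show ?thesis .
    qed
    thus "\<exists>s>0. \<forall>x. x \<noteq> 0 \<and> norm (x - 0) < s \<longrightarrow> norm ((H x - H 0) / (x - 0) - G) < r"
      using s by auto
  qed
  have "(H has_real_derivative G) (at 0)"
    using lim by (simp add: has_field_derivative_iff)
  thus ?thesis by (simp add: eqf G_def)
qed


lemma smul_l: fixes X :: "real^'m^'n" and Y :: "real^'k^'m" shows "(c *\<^sub>R X) ** Y = c *\<^sub>R (X ** Y)"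
  by (simp add: vec_eq_iff matrix_matrix_mult_def sum_distrib_left mult_ac)
lemma smul_r: fixes X :: "real^'m^'n" and Y :: "real^'k^'m" shows "X ** (c *\<^sub>R Y) = c *\<^sub>R (X ** Y)"
  by (simp add: vec_eq_iff matrix_matrix_mult_def sum_distrib_left mult_ac)

theorem proposition1:
  fixes \<mu> :: "(real^'p^'n) measure"
    and A Ua :: "real^'n^'n" and la :: "real^'n"
    and idx :: "nat \<Rightarrow> 'n"
  assumes "CARD('p) < CARD('n)"
    and "uniform_stiefel \<mu>"
    and "transpose A = A"
    and "orthogonal_matrix Ua"
    and "A = Ua ** diag_mat la ** transpose Ua"
    and "bij_betw idx {1..CARD('n)} UNIV"
    and "\<forall>i j. 1 \<le> i \<and> i \<le> j \<and> j \<le> CARD('n) \<longrightarrow> la $ idx j \<le> la $ idx i"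
  shows "\<exists>\<gamma>::real^'n.
     (\<forall>k. ((\<lambda>t. exp (kappaB \<mu> (diag_mat (la + t *\<^sub>R axis k 1)))) has_real_derivative \<gamma> $ k) (at 0)) \<and>
     (\<integral>U. bingham_density \<mu> A U *\<^sub>R (U ** transpose U) \<partial>\<mu>)
        = exp (- kappaB \<mu> A) *\<^sub>R (Ua ** diag_mat \<gamma> ** transpose Ua) \<and>
     (\<forall>i j. 1 \<le> i \<and> i \<le> j \<and> j \<le> CARD('n) \<longrightarrow> \<gamma> $ idx j \<le> \<gamma> $ idx i)"
proof (intro exI conjI)
  note us = assms(2)
  show "\<forall>k. ((\<lambda>t. exp (kappaB \<mu> (diag_mat (la + t *\<^sub>R axis k 1)))) has_real_derivative gam \<mu> la $ k) (at 0)"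
    using D3[OF us] by blast
  show "\<forall>i j. 1 \<le> i \<and> i \<le> j \<and> j \<le> CARD('n) \<longrightarrow> gam \<mu> la $ idx j \<le> gam \<mu> la $ idx i"
    using D2[OF us] assms(7) by blast
  let ?c = "exp (- kappaB \<mu> A)"
  have cU: "continuous_on UNIV (\<lambda>U::real^'p^'n. etr (transpose U ** A ** U) *\<^sub>R (U ** transpose U))"
  proof -
    have "(\<lambda>U::real^'p^'n. etr (transpose U ** A ** U) *\<^sub>R (U ** transpose U))
        = (\<lambda>U. exp (Fv la (transpose Ua ** U)) *\<^sub>R (Ua ** ((transpose Ua ** U) ** transpose (transpose Ua ** U)) ** transpose Ua))"
    proof
      fix U :: "real^'p^'n"
      have o: "Ua ** transpose Ua = mat 1" using assms(4) by (simp add: orthogonal_matrix_def)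
      have U: "U = Ua ** (transpose Ua ** U)" by (simp add: matrix_mul_assoc o)
      show "etr (transpose U ** A ** U) *\<^sub>R (U ** transpose U)
        = exp (Fv la (transpose Ua ** U)) *\<^sub>R (Ua ** ((transpose Ua ** U) ** transpose (transpose Ua ** U)) ** transpose Ua)"
        apply (subst (1 2 3 4) U)
        unfolding assms(5) rot_trace[OF assms(4)] rot_vvt etr_def trace_diag by simp
    qed
    moreover have "continuous_on UNIV \<dots>"
    proof -
      have l1: "continuous_on UNIV (\<lambda>U::real^'p^'n. transpose Ua ** U)"
        by (intro linear_continuous_on linear_conv_bounded_linear[THEN iffD1])
           (auto simp: linear_iff matrix_add_ldistrib vec_eq_iff matrix_matrix_mult_def sum_distrib_left mult_ac distrib_left sum.distrib)
      have l2: "continuous_on UNIV (\<lambda>X::real^'n^'n. Ua ** X ** transpose Ua)"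
        by (intro linear_continuous_on linear_conv_bounded_linear[THEN iffD1])
           (auto simp: linear_iff matrix_add_ldistrib vec_eq_iff matrix_matrix_mult_def sum_distrib_left sum_distrib_right mult_ac distrib_left distrib_right sum.distrib)
      have l3: "continuous_on UNIV (\<lambda>V::real^'p^'n. exp (Fv la V) *\<^sub>R (Ua ** (V ** transpose V) ** transpose Ua))"
        apply (intro continuous_on_scaleR continuous_intros)
        apply (rule continuous_on_compose2[OF l2 _ subset_UNIV])
        apply (rule cont_mat) apply (simp add: vvt_entry) apply (intro continuous_intros)
        done
      show ?thesis using continuous_on_compose2[OF l3 l1 subset_UNIV] by simp
    qed
    ultimately show ?thesis by (simp only:)
  qed
  have "(\<integral>U. bingham_density \<mu> A U *\<^sub>R (U ** transpose U) \<partial>\<mu>)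
      = ?c *\<^sub>R (\<integral>U. etr (transpose U ** A ** U) *\<^sub>R (U ** transpose U) \<partial>\<mu>)"
    by (simp add: bingham_density_def scaleR_scaleR[symmetric] del: scaleR_scaleR)
  also have "(\<integral>U. etr (transpose U ** A ** U) *\<^sub>R (U ** transpose U) \<partial>\<mu>)
      = (\<integral>V. etr (transpose (Ua ** V) ** A ** (Ua ** V)) *\<^sub>R ((Ua ** V) ** transpose (Ua ** V)) \<partial>\<mu>)"
    by (rule us_invariant[OF us cU assms(4)])
  also have "\<dots> = (\<integral>V. Ua ** (exp (Fv la V) *\<^sub>R (V ** transpose V)) ** transpose Ua \<partial>\<mu>)"
    by (rule Bochner_Integration.integral_cong)
       (simp_all add: assms(5) rot_trace[OF assms(4)] rot_vvt etr_def trace_diag smul_l smul_r)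
  also have "\<dots> = Ua ** (\<integral>V. exp (Fv la V) *\<^sub>R (V ** transpose V) \<partial>\<mu>) ** transpose Ua"
  proof (rule integral_bounded_linear)
    show "bounded_linear (\<lambda>X::real^'n^'n. Ua ** X ** transpose Ua)"
      by (intro linear_conv_bounded_linear[THEN iffD1])
         (auto simp: linear_iff matrix_add_ldistrib vec_eq_iff matrix_matrix_mult_def sum_distrib_left sum_distrib_right mult_ac distrib_left distrib_right sum.distrib)
    show "integrable \<mu> (\<lambda>V::real^'p^'n. exp (Fv la V) *\<^sub>R (V ** transpose V))"
      by (rule us_integrable[OF us], rule cont_mat) (simp add: vvt_entry, intro continuous_intros)
  qed
  also have "\<dots> = Ua ** diag_mat (gam \<mu> la) ** transpose Ua" by (simp add: D1[OF us])
  finally show "(\<integral>U. bingham_density \<mu> A U *\<^sub>R (U ** transpose U) \<partial>\<mu>)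
        = ?c *\<^sub>R (Ua ** diag_mat (gam \<mu> la) ** transpose Ua)" .
qed

end
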